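(* Fix $\sigma>0$. There exist, for every $n\ge 1$, a distribution $\mathcal{D}_n$ supported on $[0,1]$ and a noise model, namely i.i.d. $\eta_i\sim\mathcal{N}(0,\sigma^2)$ independent of the rewards (in particular $\sigma$-sub-Gaussian), such that the following holds. Let $X_1,\dots,X_n$ be i.i.d. with law $\mathcal{D}_n$ and let the decision maker observe only $y_i=X_i+\eta_i$. Then $$\lim_{n\to\infty}\ \sup_{\tau}\ \frac{\mathbb{E}[X_\tau]}{\mathbb{E}[\max_{i\in[n]}X_i]}=0,$$ where the supremum ranges over all (possibly randomized) rules $\tau\in\{1,\dots,n+1\}$ whose choice depends only on the observations $(y_1,\dots,y_n)$ and independent internal randomness.
   Context: The convention $X_{n+1}:=0$ is used: $\tau=n+1$ means that no index is accepted and the payoff is $0$. The payoff of a rule is $\mathbb{E}[X_\tau]$ and the benchmark (prophet) is $\mathbb{E}[\max_{i\in[n]}X_i]$. *)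

theory Defs
  imports "HOL-Probability.Probability"
begin

text \<open>Indices are 0-based: rewards X_0..X_(n-1); a rule returns an index k in {0..n};
  k = n means that no index is accepted (payoff 0).\<close>

text \<open>Gaussian noise law N(0, sigma^2) (normal_density takes the standard deviation).\<close>
definition noise :: "real \<Rightarrow> real measure" where
  "noise \<sigma> = density lborel (normal_density 0 \<sigma>)"

text \<open>Joint law of (X, eta, U): X_i iid D, eta_i iid N(0,sigma^2), U uniform on [0,1]
  (internal randomness of the rule), all independent.\<close>
definition joint :: "real measure \<Rightarrow> real \<Rightarrow> nat \<Rightarrow>
    ((nat \<Rightarrow> real) \<times> (nat \<Rightarrow> real) \<times> real) measure" where
  "joint D \<sigma> n = (PiM {..<n} (\<lambda>_. D)) \<Otimes>\<^sub>M
      ((PiM {..<n} (\<lambda>_. noise \<sigma>)) \<Otimes>\<^sub>M uniform_measure lborel {0..1})"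

definition rules :: "nat \<Rightarrow> ((nat \<Rightarrow> real) \<times> real \<Rightarrow> nat) set" where
  "rules n = {\<tau>. \<tau> \<in> (PiM {..<n} (\<lambda>_. borel :: real measure)) \<Otimes>\<^sub>M (borel :: real measure)
                    \<rightarrow>\<^sub>M count_space UNIV \<and> (\<forall>z. \<tau> z \<le> n)}"

definition payoff :: "real measure \<Rightarrow> real \<Rightarrow> nat \<Rightarrow> ((nat \<Rightarrow> real) \<times> real \<Rightarrow> nat) \<Rightarrow> real" where
  "payoff D \<sigma> n \<tau> = (\<integral>\<omega>. (let x = fst \<omega>; e = fst (snd \<omega>); u = snd (snd \<omega>);
        y = (\<lambda>i\<in>{..<n}. x i + e i); k = \<tau> (y, u)
      in if k < n then x k else 0) \<partial>joint D \<sigma> n)"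

definition prophet :: "real measure \<Rightarrow> nat \<Rightarrow> real" where
  "prophet D n = (\<integral>x. (MAX i\<in>{..<n}. x i) \<partial>PiM {..<n} (\<lambda>_. D))"

end

theory Submission
  imports Defs
begin


lemma decomp_both:
  fixes D N U :: "real measure" and F :: "(nat\<Rightarrow>real)\<times>(nat\<Rightarrow>real)\<times>real \<Rightarrow> ennreal"
  assumes D: "prob_space D" and N: "prob_space N" and U: "prob_space U" and k: "k < n"
  and F[measurable]: "F \<in> borel_measurable (PiM {..<n} (\<lambda>_. D) \<Otimes>\<^sub>M (PiM {..<n} (\<lambda>_. N) \<Otimes>\<^sub>M U))"
  shows "(\<integral>\<^sup>+\<omega>. F \<omega> \<partial>(PiM {..<n} (\<lambda>_. D) \<Otimes>\<^sub>M (PiM {..<n} (\<lambda>_. N) \<Otimes>\<^sub>M U))) =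
    (\<integral>\<^sup>+x. \<integral>\<^sup>+a. \<integral>\<^sup>+e. \<integral>\<^sup>+u. F (x(k:=a), e, u) \<partial>U \<partial>PiM {..<n} (\<lambda>_. N) \<partial>D \<partial>PiM ({..<n}-{k}) (\<lambda>_. D))"
   and "(\<integral>\<^sup>+\<omega>. F \<omega> \<partial>(PiM {..<n} (\<lambda>_. D) \<Otimes>\<^sub>M (PiM {..<n} (\<lambda>_. N) \<Otimes>\<^sub>M U))) =
    (\<integral>\<^sup>+x. \<integral>\<^sup>+e. \<integral>\<^sup>+t. \<integral>\<^sup>+u. F (x, e(k:=t), u) \<partial>U \<partial>N \<partial>PiM ({..<n}-{k}) (\<lambda>_. N) \<partial>PiM {..<n} (\<lambda>_. D))"
proof -
  interpret D: prob_space D by fact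
  interpret N: prob_space N by fact
  interpret U: prob_space U by fact
  interpret PD: product_sigma_finite "\<lambda>_::nat. D" by (simp add: product_sigma_finite_def D.sigma_finite_measure_axioms)
  interpret PN: product_sigma_finite "\<lambda>_::nat. N" by (simp add: product_sigma_finite_def N.sigma_finite_measure_axioms)
  interpret PDs: sigma_finite_measure "PiM {..<n} (\<lambda>_. D)"
    by (rule PD.sigma_finite) simp
  interpret PNs: sigma_finite_measure "PiM {..<n} (\<lambda>_. N)"
    by (rule PN.sigma_finite) simp
  interpret P1: pair_sigma_finite "PiM {..<n} (\<lambda>_. N)" U ..
  interpret P2: pair_sigma_finite "PiM {..<n} (\<lambda>_. D)" "PiM {..<n} (\<lambda>_. N) \<Otimes>\<^sub>M U" ..
  define I where "I = {..<n} - {k}"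
  have ins: "{..<n} = insert k I" "k \<notin> I" "finite I" using k by (auto simp: I_def)
  define G where "G = (\<lambda>(x,e). \<integral>\<^sup>+u. F(x,e,u) \<partial>U)"
  have "(\<lambda>p. F (fst (fst p), snd (fst p), snd p)) \<in> borel_measurable ((PiM {..<n} (\<lambda>_. D) \<Otimes>\<^sub>M PiM {..<n} (\<lambda>_. N)) \<Otimes>\<^sub>M U)"
    by measurable
  from U.borel_measurable_nn_integral_fst[OF this[unfolded case_prod_beta'[symmetric]]]
  have mG: "G \<in> borel_measurable (PiM {..<n} (\<lambda>_. D) \<Otimes>\<^sub>M PiM {..<n} (\<lambda>_. N))"
    unfolding G_def by (simp add: case_prod_beta')
  have s2: "(\<integral>\<^sup>+\<omega>. F \<omega> \<partial>(PiM {..<n} (\<lambda>_. D) \<Otimes>\<^sub>M (PiM {..<n} (\<lambda>_. N) \<Otimes>\<^sub>M U))) =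
     (\<integral>\<^sup>+x. \<integral>\<^sup>+e. \<integral>\<^sup>+u. F (x, e, u) \<partial>U \<partial>PiM {..<n} (\<lambda>_. N) \<partial>PiM {..<n} (\<lambda>_. D))"
  proof -
    have "(\<integral>\<^sup>+\<omega>. F \<omega> \<partial>(PiM {..<n} (\<lambda>_. D) \<Otimes>\<^sub>M (PiM {..<n} (\<lambda>_. N) \<Otimes>\<^sub>M U))) =
       (\<integral>\<^sup>+x. \<integral>\<^sup>+eu. F (x, eu) \<partial>(PiM {..<n} (\<lambda>_. N) \<Otimes>\<^sub>M U) \<partial>PiM {..<n} (\<lambda>_. D))"
      by (rule P1.P.nn_integral_fst[symmetric]) simp
    also have "\<dots> = (\<integral>\<^sup>+x. \<integral>\<^sup>+e. \<integral>\<^sup>+u. F (x, e, u) \<partial>U \<partial>PiM {..<n} (\<lambda>_. N) \<partial>PiM {..<n} (\<lambda>_. D))"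
      by (intro nn_integral_cong U.nn_integral_fst[symmetric]) simp
    finally show ?thesis .
  qed
  have "(\<lambda>(x,e). \<integral>\<^sup>+u. F(x,e,u) \<partial>U) \<in> borel_measurable (PiM {..<n} (\<lambda>_. D) \<Otimes>\<^sub>M PiM {..<n} (\<lambda>_. N))"
    using mG unfolding G_def .
  from PNs.borel_measurable_nn_integral_fst[OF this]
  have m: "(\<lambda>x. \<integral>\<^sup>+e. \<integral>\<^sup>+u. F(x,e,u) \<partial>U \<partial>PiM {..<n} (\<lambda>_. N)) \<in> borel_measurable (PiM {..<n} (\<lambda>_. D))"
    by simp
  show "(\<integral>\<^sup>+\<omega>. F \<omega> \<partial>(PiM {..<n} (\<lambda>_. D) \<Otimes>\<^sub>M (PiM {..<n} (\<lambda>_. N) \<Otimes>\<^sub>M U))) =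
    (\<integral>\<^sup>+x. \<integral>\<^sup>+a. \<integral>\<^sup>+e. \<integral>\<^sup>+u. F (x(k:=a), e, u) \<partial>U \<partial>PiM {..<n} (\<lambda>_. N) \<partial>D \<partial>PiM ({..<n}-{k}) (\<lambda>_. D))"
    unfolding s2 I_def[symmetric] using m unfolding ins(1) by (rule PD.product_nn_integral_insert[OF ins(3,2)])
  show "(\<integral>\<^sup>+\<omega>. F \<omega> \<partial>(PiM {..<n} (\<lambda>_. D) \<Otimes>\<^sub>M (PiM {..<n} (\<lambda>_. N) \<Otimes>\<^sub>M U))) =
    (\<integral>\<^sup>+x. \<integral>\<^sup>+e. \<integral>\<^sup>+t. \<integral>\<^sup>+u. F (x, e(k:=t), u) \<partial>U \<partial>N \<partial>PiM ({..<n}-{k}) (\<lambda>_. N) \<partial>PiM {..<n} (\<lambda>_. D))"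
    unfolding s2 I_def[symmetric]
  proof (intro nn_integral_cong)
    fix x assume x: "x \<in> space (PiM {..<n} (\<lambda>_. D))"
    have "(\<lambda>e. G (x, e)) \<in> borel_measurable (PiM (insert k I) (\<lambda>_. N))"
      using measurable_Pair2[OF mG x] unfolding ins(1) .
    then show "(\<integral>\<^sup>+e. \<integral>\<^sup>+u. F (x, e, u) \<partial>U \<partial>PiM {..<n} (\<lambda>_. N)) = 
       (\<integral>\<^sup>+e. \<integral>\<^sup>+t. \<integral>\<^sup>+u. F (x, e(k:=t), u) \<partial>U \<partial>N \<partial>PiM I (\<lambda>_. N))"
      unfolding G_def ins(1) using PN.product_nn_integral_insert[OF ins(3,2)] by simp
  qed
qed



definition Dm :: "real \<Rightarrow> real \<Rightarrow> real measure" where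
  "Dm p \<delta> = distr (measure_pmf (bernoulli_pmf p)) borel (\<lambda>b. if b then \<delta> else 0)"

lemma sets_Dm[measurable_cong]: "sets (Dm p \<delta>) = sets borel"
  by (simp add: Dm_def)

lemma space_Dm[simp]: "space (Dm p \<delta>) = UNIV"
  by (simp add: Dm_def)

lemma prob_Dm: "prob_space (Dm p \<delta>)"
  unfolding Dm_def by (rule prob_space.prob_space_distr) (auto simp: measure_pmf.prob_space_axioms)

lemma AE_Dm: "AE a in Dm p \<delta>. a \<in> {0, \<delta>}"
  unfolding Dm_def by (subst AE_distr_iff) (auto simp: AE_measure_pmf_iff)

lemma emeasure_Dm:
  assumes "0 \<le> p" "p \<le> 1" "\<delta> \<noteq> 0"
  shows "emeasure (Dm p \<delta>) {0} = ennreal (1-p)" "emeasure (Dm p \<delta>) {\<delta>} = ennreal p"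
proof -
  have "(\<lambda>b. if b then \<delta> else 0) -` {0} \<inter> space (measure_pmf (bernoulli_pmf p)) = {False}"
    using assms by auto
  then show "emeasure (Dm p \<delta>) {0} = ennreal (1-p)"
    unfolding Dm_def using assms by (subst emeasure_distr) (auto simp: emeasure_pmf_single)
  have "(\<lambda>b. if b then \<delta> else 0) -` {\<delta>} \<inter> space (measure_pmf (bernoulli_pmf p)) = {True}"
    using assms by (auto split: if_splits)
  then show "emeasure (Dm p \<delta>) {\<delta>} = ennreal p"
    unfolding Dm_def using assms by (subst emeasure_distr) (auto simp: emeasure_pmf_single)
qed

lemma nn_integral_Dm:
  assumes "0 \<le> p" "p \<le> 1" "\<delta> \<noteq> 0"
  shows "(\<integral>\<^sup>+a. g a \<partial>Dm p \<delta>) = ennreal (1-p) * g 0 + ennreal p * g \<delta>"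
proof -
  have "AE a in Dm p \<delta>. g a = g 0 * indicator {0} a + g \<delta> * indicator {\<delta>} a"
    using AE_Dm by eventually_elim (use assms in \<open>auto simp: indicator_def\<close>)
  then have "(\<integral>\<^sup>+a. g a \<partial>Dm p \<delta>) = (\<integral>\<^sup>+a. g 0 * indicator {0} a + g \<delta> * indicator {\<delta>} a \<partial>Dm p \<delta>)"
    by (rule nn_integral_cong_AE)
  also have "\<dots> = g 0 * emeasure (Dm p \<delta>) {0} + g \<delta> * emeasure (Dm p \<delta>) {\<delta>}"
    by (subst nn_integral_add) (auto simp: nn_integral_cmult_indicator)
  finally show ?thesis using emeasure_Dm[OF assms] by (simp add: mult.commute)
qed

lemma sets_noise[measurable_cong]: "sets (noise \<sigma>) = sets borel"
  by (simp add: noise_def)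

lemma prob_noise: "\<sigma> > 0 \<Longrightarrow> prob_space (noise \<sigma>)"
  unfolding noise_def by (rule prob_space_normal_density)

lemma sets_U[measurable_cong]: "sets (uniform_measure lborel {0..1::real}) = sets borel"
  by simp

lemma comp_Dm[measurable]: "i \<in> I \<Longrightarrow> (\<lambda>x. x i) \<in> PiM I (\<lambda>_. Dm p \<delta>) \<rightarrow>\<^sub>M borel"
  using measurable_component_singleton[of i I "\<lambda>_. Dm p \<delta>"] by (simp add: measurable_cong_sets[OF refl sets_Dm])

lemma comp_noise[measurable]: "i \<in> I \<Longrightarrow> (\<lambda>x. x i) \<in> PiM I (\<lambda>_. noise \<sigma>) \<rightarrow>\<^sub>M borel"
  using measurable_component_singleton[of i I "\<lambda>_. noise \<sigma>"] by (simp add: measurable_cong_sets[OF refl sets_noise])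

lemma snd_U[measurable]: "snd \<in> M \<Otimes>\<^sub>M uniform_measure lborel {0..1::real} \<rightarrow>\<^sub>M borel"
  using measurable_snd[of M "uniform_measure lborel {0..1::real}"] by (simp add: measurable_cong_sets[OF refl sets_U])

lemma prob_U: "prob_space (uniform_measure lborel {0..1::real})"
  by (rule prob_space_uniform_measure) auto



lemma normal_pointwise:
  fixes \<sigma> \<delta> s :: real
  assumes "\<sigma> > 0" "\<delta> \<ge> 0"
  shows "normal_density \<delta> \<sigma> s - normal_density 0 \<sigma> s \<le> normal_density \<delta> \<sigma> s * (\<bar>s - \<delta>\<bar> + \<delta>) * \<delta> / \<sigma>\<^sup>2"
proof -
  define c where "c = 1 / sqrt (2 * pi * \<sigma>\<^sup>2)"
  define z where "z = ((s-\<delta>)\<^sup>2 - s\<^sup>2) / (2 * \<sigma>\<^sup>2)"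
  have c: "c \<ge> 0" unfolding c_def by simp
  have e: "exp (-(s - 0)\<^sup>2/ (2 * \<sigma>\<^sup>2)) = exp (-(s - \<delta>)\<^sup>2/ (2 * \<sigma>\<^sup>2)) * exp z"
    unfolding z_def exp_add[symmetric] using assms by (simp add: field_simps)
  have "normal_density 0 \<sigma> s = normal_density \<delta> \<sigma> s * exp z"
    unfolding normal_density_def e by simp
  also have "\<dots> \<ge> normal_density \<delta> \<sigma> s * (1 + z)"
    by (intro mult_left_mono exp_ge_add_one_self) simp
  finally have 1: "normal_density \<delta> \<sigma> s - normal_density 0 \<sigma> s \<le> normal_density \<delta> \<sigma> s * (- z)"
    by (simp add: algebra_simps)
  have "- z = (2 * s * \<delta> - \<delta>\<^sup>2) / (2*\<sigma>\<^sup>2)" unfolding z_def by (simp add: power2_eq_square field_simps minus_divide_left)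
  also have "\<dots> \<le> (\<bar>s - \<delta>\<bar> + \<delta>) * \<delta> / \<sigma>\<^sup>2"
  proof -
    have "2 * s * \<delta> - \<delta>\<^sup>2 \<le> 2 * ((\<bar>s - \<delta>\<bar> + \<delta>) * \<delta>)"
    proof -
      have "s \<le> \<bar>s - \<delta>\<bar> + \<delta>" by linarith
      then have "s * \<delta> \<le> (\<bar>s - \<delta>\<bar> + \<delta>) * \<delta>" using assms by (intro mult_right_mono) auto
      moreover have "0 \<le> \<delta> * \<delta>" by simp
      ultimately show ?thesis unfolding power2_eq_square by linarith
    qed
    then have "(2 * s * \<delta> - \<delta>\<^sup>2) / (2*\<sigma>\<^sup>2) \<le> 2 * ((\<bar>s - \<delta>\<bar> + \<delta>) * \<delta>) / (2*\<sigma>\<^sup>2)"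
      by (rule divide_right_mono) simp
    then show ?thesis by simp
  qed
  finally have "- z \<le> (\<bar>s - \<delta>\<bar> + \<delta>) * \<delta> / \<sigma>\<^sup>2" .
  with 1 show ?thesis
    by (smt (verit, ccfv_SIG) mult_left_mono normal_density_nonneg times_divide_eq_right mult.assoc)
qed

lemma shift_bound:
  fixes \<sigma> \<delta> :: real and K :: "real \<Rightarrow> ennreal"
  assumes \<sigma>: "\<sigma> > 0" and \<delta>: "\<delta> \<ge> 0" and K[measurable]: "K \<in> borel_measurable borel" and K1: "\<And>s. K s \<le> 1"
  shows "(\<integral>\<^sup>+t. K (\<delta> + t) \<partial>noise \<sigma>) \<le> (\<integral>\<^sup>+t. K t \<partial>noise \<sigma>) + ennreal ((\<delta>/\<sigma>\<^sup>2) * (\<sigma> * sqrt (2/pi) + \<delta>))"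
proof -
  have "(\<integral>\<^sup>+t. K (\<delta> + t) \<partial>noise \<sigma>) = (\<integral>\<^sup>+t. ennreal (normal_density 0 \<sigma> t) * K (\<delta> + t) \<partial>lborel)"
    unfolding noise_def by (simp add: nn_integral_density)
  also have "\<dots> = (\<integral>\<^sup>+t. ennreal (normal_density 0 \<sigma> ((\<delta> + t) - \<delta>)) * K (\<delta> + t) \<partial>lborel)"
    by simp
  also have "\<dots> = (\<integral>\<^sup>+s. ennreal (normal_density 0 \<sigma> (s - \<delta>)) * K s \<partial>distr lborel borel ((+) \<delta>))"
    by (subst nn_integral_distr) auto
  also have "\<dots> = (\<integral>\<^sup>+s. ennreal (normal_density \<delta> \<sigma> s) * K s \<partial>lborel)"
    by (simp add: lborel_distr_plus normal_density_def)
  also have "\<dots> \<le> (\<integral>\<^sup>+s. ennreal (normal_density 0 \<sigma> s) * K s + ennreal (normal_density \<delta> \<sigma> s * (\<bar>s - \<delta>\<bar> + \<delta>) * \<delta> / \<sigma>\<^sup>2) \<partial>lborel)"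
  proof (intro nn_integral_mono)
    fix s
    have "ennreal (normal_density \<delta> \<sigma> s) \<le> ennreal (normal_density 0 \<sigma> s) + ennreal (normal_density \<delta> \<sigma> s * (\<bar>s - \<delta>\<bar> + \<delta>) * \<delta> / \<sigma>\<^sup>2)"
    proof -
      have R: "0 \<le> normal_density \<delta> \<sigma> s * (\<bar>s - \<delta>\<bar> + \<delta>) * \<delta> / \<sigma>\<^sup>2" using \<delta> by simp
      have "ennreal (normal_density \<delta> \<sigma> s) \<le> ennreal (normal_density 0 \<sigma> s + normal_density \<delta> \<sigma> s * (\<bar>s - \<delta>\<bar> + \<delta>) * \<delta> / \<sigma>\<^sup>2)"
        using normal_pointwise[OF \<sigma> \<delta>, of s] by (intro ennreal_leI) simp
      then show ?thesis using R by (simp add: ennreal_plus)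
    qed
    then have "ennreal (normal_density \<delta> \<sigma> s) * K s \<le> (ennreal (normal_density 0 \<sigma> s) + ennreal (normal_density \<delta> \<sigma> s * (\<bar>s - \<delta>\<bar> + \<delta>) * \<delta> / \<sigma>\<^sup>2)) * K s"
      by (rule mult_right_mono) simp
    also have "\<dots> \<le> ennreal (normal_density 0 \<sigma> s) * K s + ennreal (normal_density \<delta> \<sigma> s * (\<bar>s - \<delta>\<bar> + \<delta>) * \<delta> / \<sigma>\<^sup>2)"
      using mult_left_mono[OF K1[of s], of "ennreal (normal_density \<delta> \<sigma> s * (\<bar>s - \<delta>\<bar> + \<delta>) * \<delta> / \<sigma>\<^sup>2)"]
      by (simp add: distrib_right add_left_mono)
    finally show "ennreal (normal_density \<delta> \<sigma> s) * K s \<le> ennreal (normal_density 0 \<sigma> s) * K s + ennreal (normal_density \<delta> \<sigma> s * (\<bar>s - \<delta>\<bar> + \<delta>) * \<delta> / \<sigma>\<^sup>2)" .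
  qed
  also have "\<dots> = (\<integral>\<^sup>+s. ennreal (normal_density 0 \<sigma> s) * K s \<partial>lborel) + (\<integral>\<^sup>+s. ennreal (normal_density \<delta> \<sigma> s * (\<bar>s - \<delta>\<bar> + \<delta>) * \<delta> / \<sigma>\<^sup>2) \<partial>lborel)"
    by (rule nn_integral_add) auto
  also have "(\<integral>\<^sup>+s. ennreal (normal_density 0 \<sigma> s) * K s \<partial>lborel) = (\<integral>\<^sup>+t. K t \<partial>noise \<sigma>)"
    unfolding noise_def by (simp add: nn_integral_density)
  also have "(\<integral>\<^sup>+s. ennreal (normal_density \<delta> \<sigma> s * (\<bar>s - \<delta>\<bar> + \<delta>) * \<delta> / \<sigma>\<^sup>2) \<partial>lborel)
      = ennreal (\<integral>s. normal_density \<delta> \<sigma> s * (\<bar>s - \<delta>\<bar> + \<delta>) * \<delta> / \<sigma>\<^sup>2 \<partial>lborel)"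
  proof (rule nn_integral_eq_integral)
    have "integrable lborel (\<lambda>s. (normal_density \<delta> \<sigma> s * \<bar>s - \<delta>\<bar>^1 + \<delta> * normal_density \<delta> \<sigma> s) * (\<delta> / \<sigma>\<^sup>2))"
      using integrable_normal_moment_abs[OF \<sigma>, of \<delta> 1] integrable_normal_density[OF \<sigma>, of \<delta>] by auto
    then show "integrable lborel (\<lambda>s. normal_density \<delta> \<sigma> s * (\<bar>s - \<delta>\<bar> + \<delta>) * \<delta> / \<sigma>\<^sup>2)"
      by (simp add: algebra_simps add_divide_distrib)
  qed (use \<delta> in auto)
  also have "(\<integral>s. normal_density \<delta> \<sigma> s * (\<bar>s - \<delta>\<bar> + \<delta>) * \<delta> / \<sigma>\<^sup>2 \<partial>lborel) = 
     (\<integral>s. (normal_density \<delta> \<sigma> s * \<bar>s - \<delta>\<bar>^(2*0+1) + \<delta> * normal_density \<delta> \<sigma> s) \<partial>lborel) * (\<delta> / \<sigma>\<^sup>2)"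
  proof -
    have eq: "(\<lambda>s. normal_density \<delta> \<sigma> s * (\<bar>s - \<delta>\<bar> + \<delta>) * \<delta> / \<sigma>\<^sup>2) = (\<lambda>s. (normal_density \<delta> \<sigma> s * \<bar>s - \<delta>\<bar>^(2*0+1) + \<delta> * normal_density \<delta> \<sigma> s) * (\<delta> / \<sigma>\<^sup>2))"
      by (auto simp: fun_eq_iff field_simps)
    show ?thesis unfolding eq by (rule integral_mult_left_zero)
  qed
  also have "\<dots> = (\<delta>/\<sigma>\<^sup>2) * (\<sigma> * sqrt (2/pi) + \<delta>)"
    using integrable_normal_moment_abs[OF \<sigma>, of \<delta> "2*0+1"] integrable_normal_density[OF \<sigma>, of \<delta>]
      integral_normal_moment_abs_odd[OF \<sigma>, of \<delta> 0] integral_normal_density[OF \<sigma>, of \<delta>]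
    by (simp add: Bochner_Integration.integral_add)
  finally show ?thesis by simp
qed



context
  fixes \<sigma> p \<delta> :: real and n k :: nat and \<tau>
  assumes \<sigma>: "\<sigma> > 0" and p: "0 < p" "p < 1" and \<delta>: "0 < \<delta>" and k: "k < n" and \<tau>: "\<tau> \<in> rules n"
begin

lemma tau_meas[measurable]: "\<tau> \<in> PiM {..<n} (\<lambda>_. borel) \<Otimes>\<^sub>M borel \<rightarrow>\<^sub>M count_space UNIV"
  using \<tau> by (simp add: rules_def)

definition Fs :: "real \<Rightarrow> (nat\<Rightarrow>real)\<times>(nat\<Rightarrow>real)\<times>real \<Rightarrow> ennreal" where
  "Fs c \<omega> = of_bool (\<tau> (\<lambda>i\<in>{..<n}. if i = k then c + fst (snd \<omega>) k else fst \<omega> i + fst (snd \<omega>) i, snd (snd \<omega>)) = k)"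

lemma Fs_meas[measurable]: "Fs c \<in> borel_measurable (PiM {..<n} (\<lambda>_. Dm p \<delta>) \<Otimes>\<^sub>M (PiM {..<n} (\<lambda>_. noise \<sigma>) \<Otimes>\<^sub>M uniform_measure lborel {0..1}))"
proof -
  let ?J = "PiM {..<n} (\<lambda>_. Dm p \<delta>) \<Otimes>\<^sub>M (PiM {..<n} (\<lambda>_. noise \<sigma>) \<Otimes>\<^sub>M uniform_measure lborel {0..1::real})"
  have ek: "(\<lambda>\<omega>. fst (snd \<omega>) j) \<in> ?J \<rightarrow>\<^sub>M borel" if "j < n" for j
    by (rule measurable_compose[OF measurable_compose[OF measurable_snd measurable_fst] comp_noise]) (use that in simp)
  have xk: "(\<lambda>\<omega>. fst \<omega> j) \<in> ?J \<rightarrow>\<^sub>M borel" if "j < n" for j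
    by (rule measurable_compose[OF measurable_fst comp_Dm]) (use that in simp)
  have Y: "(\<lambda>\<omega>. ((\<lambda>i\<in>{..<n}. if i = k then c + fst (snd \<omega>) k else fst \<omega> i + fst (snd \<omega>) i), snd (snd \<omega>)))
     \<in> ?J \<rightarrow>\<^sub>M PiM {..<n} (\<lambda>_. borel) \<Otimes>\<^sub>M borel"
  proof (rule measurable_Pair)
    show "(\<lambda>\<omega>. (\<lambda>i\<in>{..<n}. if i = k then c + fst (snd \<omega>) k else fst \<omega> i + fst (snd \<omega>) i)) \<in> ?J \<rightarrow>\<^sub>M PiM {..<n} (\<lambda>_. borel)"
    proof (rule measurable_restrict)
      fix i assume i: "i \<in> {..<n}"
      show "(\<lambda>\<omega>. if i = k then c + fst (snd \<omega>) k else fst \<omega> i + fst (snd \<omega>) i) \<in> ?J \<rightarrow>\<^sub>M borel"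
      proof (cases "i = k")
        case True then show ?thesis unfolding if_P[OF True] by (intro borel_measurable_add measurable_const ek[OF k]) auto
      next
        case False then show ?thesis unfolding if_not_P[OF False] using i by (intro borel_measurable_add ek xk) auto
      qed
    qed
    show "(\<lambda>\<omega>. snd (snd \<omega>)) \<in> ?J \<rightarrow>\<^sub>M borel"
      using measurable_compose[OF measurable_snd[of "PiM {..<n} (\<lambda>_. Dm p \<delta>)" "PiM {..<n} (\<lambda>_. noise \<sigma>) \<Otimes>\<^sub>M uniform_measure lborel {0..1}"] snd_U[of "PiM {..<n} (\<lambda>_. noise \<sigma>)"]] .
  qed
  have "(\<lambda>z::nat. of_bool (z = k) :: ennreal) \<in> count_space UNIV \<rightarrow>\<^sub>M borel" by simp
  from measurable_compose[OF measurable_compose[OF Y tau_meas] this]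
  show ?thesis unfolding Fs_def[abs_def] .
qed


abbreviation "JJ \<equiv> PiM {..<n} (\<lambda>_. Dm p \<delta>) \<Otimes>\<^sub>M (PiM {..<n} (\<lambda>_. noise \<sigma>) \<Otimes>\<^sub>M uniform_measure lborel {0..1::real})"
abbreviation "UU \<equiv> uniform_measure lborel {0..1::real}"

definition L :: "(nat \<Rightarrow> real) \<Rightarrow> (nat \<Rightarrow> real) \<Rightarrow> real \<Rightarrow> real \<Rightarrow> ennreal" where
  "L x e s u = of_bool (\<tau> (\<lambda>i\<in>{..<n}. if i = k then s else x i + e i, u) = k)"

lemma L_meas: "(\<lambda>(s,u). L x e s u) \<in> borel_measurable (borel \<Otimes>\<^sub>M UU)"
proof -
  have Y: "(\<lambda>z. ((\<lambda>i\<in>{..<n}. if i = k then fst z else x i + e i), snd z)) \<in> (borel \<Otimes>\<^sub>M UU) \<rightarrow>\<^sub>M PiM {..<n} (\<lambda>_. borel) \<Otimes>\<^sub>M borel"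
  proof (rule measurable_Pair)
    show "(\<lambda>z. (\<lambda>i\<in>{..<n}. if i = k then fst z else x i + e i)) \<in> (borel \<Otimes>\<^sub>M UU) \<rightarrow>\<^sub>M PiM {..<n} (\<lambda>_. borel)"
    proof (rule measurable_restrict)
      fix i assume i: "i \<in> {..<n}"
      show "(\<lambda>z. if i = k then fst z else x i + e i) \<in> (borel \<Otimes>\<^sub>M UU) \<rightarrow>\<^sub>M borel"
        by (cases "i = k") (simp_all only: if_True if_False measurable_fst measurable_const space_borel UNIV_I refl)
    qed
    show "snd \<in> (borel \<Otimes>\<^sub>M UU) \<rightarrow>\<^sub>M borel" by (rule snd_U)
  qed
  have "(\<lambda>z::nat. of_bool (z = k) :: ennreal) \<in> count_space UNIV \<rightarrow>\<^sub>M borel" by simp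
  from measurable_compose[OF measurable_compose[OF Y tau_meas] this]
  show ?thesis unfolding L_def case_prod_beta .
qed

lemma K_meas: "(\<lambda>s. \<integral>\<^sup>+u. L x e s u \<partial>UU) \<in> borel_measurable borel"
proof -
  interpret U: prob_space UU by (rule prob_U)
  show ?thesis using U.borel_measurable_nn_integral_fst[OF L_meas[of x e]] by simp
qed

lemma L_u_meas: "(\<lambda>u. L x e s u) \<in> borel_measurable UU"
  using measurable_Pair2[OF L_meas[of x e], of s] by simp

lemma Fs_L: "Fs c (x, e(k:=t), u) = L x e (c + t) u"
  unfolding Fs_def L_def by (simp cong: if_cong)

lemma claimC:
  "(\<integral>\<^sup>+\<omega>. Fs \<delta> \<omega> \<partial>JJ) \<le> (\<integral>\<^sup>+\<omega>. Fs 0 \<omega> \<partial>JJ) + ennreal ((\<delta>/\<sigma>\<^sup>2) * (\<sigma> * sqrt (2/pi) + \<delta>))"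
proof -
  define T where "T = ennreal ((\<delta>/\<sigma>\<^sup>2) * (\<sigma> * sqrt (2/pi) + \<delta>))"
  interpret U: prob_space UU by (rule prob_U)
  interpret N: prob_space "noise \<sigma>" by (rule prob_noise[OF \<sigma>])
  interpret JJ: prob_space JJ
    by (intro prob_space_pair prob_space_PiM prob_Dm prob_noise[OF \<sigma>] prob_U N.prob_space_axioms U.prob_space_axioms)
  have "(\<integral>\<^sup>+\<omega>. Fs \<delta> \<omega> \<partial>JJ) = (\<integral>\<^sup>+x. \<integral>\<^sup>+e. \<integral>\<^sup>+t. \<integral>\<^sup>+u. Fs \<delta> (x, e(k:=t), u) \<partial>UU \<partial>noise \<sigma> \<partial>PiM ({..<n}-{k}) (\<lambda>_. noise \<sigma>) \<partial>PiM {..<n} (\<lambda>_. Dm p \<delta>))"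
    by (rule decomp_both(2)[OF prob_Dm prob_noise[OF \<sigma>] prob_U k Fs_meas])
  also have "\<dots> \<le> (\<integral>\<^sup>+x. \<integral>\<^sup>+e. \<integral>\<^sup>+t. \<integral>\<^sup>+u. Fs 0 (x, e(k:=t), u) + T \<partial>UU \<partial>noise \<sigma> \<partial>PiM ({..<n}-{k}) (\<lambda>_. noise \<sigma>) \<partial>PiM {..<n} (\<lambda>_. Dm p \<delta>))"
  proof (rule nn_integral_mono, rule nn_integral_mono)
    fix x e
    have "(\<integral>\<^sup>+t. \<integral>\<^sup>+u. Fs \<delta> (x, e(k:=t), u) \<partial>UU \<partial>noise \<sigma>) = (\<integral>\<^sup>+t. (\<lambda>s. \<integral>\<^sup>+u. L x e s u \<partial>UU) (\<delta> + t) \<partial>noise \<sigma>)"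
      by (simp add: Fs_L)
    also have "\<dots> \<le> (\<integral>\<^sup>+t. (\<lambda>s. \<integral>\<^sup>+u. L x e s u \<partial>UU) t \<partial>noise \<sigma>) + T"
      unfolding T_def
    proof (rule shift_bound[OF \<sigma> less_imp_le[OF \<delta>] K_meas])
      fix s
      have "(\<integral>\<^sup>+u. L x e s u \<partial>UU) \<le> (\<integral>\<^sup>+u. 1 \<partial>UU)"
        by (intro nn_integral_mono) (simp add: L_def)
      then show "(\<integral>\<^sup>+u. L x e s u \<partial>UU) \<le> 1" by simp
    qed
    also have "\<dots> = (\<integral>\<^sup>+t. (\<integral>\<^sup>+u. L x e t u \<partial>UU) + T \<partial>noise \<sigma>)"
    proof -
      have "(\<lambda>t. \<integral>\<^sup>+u. L x e t u \<partial>UU) \<in> borel_measurable (noise \<sigma>)"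
        by (subst measurable_cong_sets[OF sets_noise refl]) (rule K_meas)
      then show ?thesis by (subst nn_integral_add) (auto simp: N.emeasure_space_1)
    qed
    also have "\<dots> = (\<integral>\<^sup>+t. \<integral>\<^sup>+u. Fs 0 (x, e(k:=t), u) + T \<partial>UU \<partial>noise \<sigma>)"
      using L_u_meas by (intro nn_integral_cong) (simp add: Fs_L nn_integral_add)
    finally show "(\<integral>\<^sup>+t. \<integral>\<^sup>+u. Fs \<delta> (x, e(k:=t), u) \<partial>UU \<partial>noise \<sigma>) \<le> (\<integral>\<^sup>+t. \<integral>\<^sup>+u. Fs 0 (x, e(k:=t), u) + T \<partial>UU \<partial>noise \<sigma>)" .
  qed
  also have "\<dots> = (\<integral>\<^sup>+\<omega>. Fs 0 \<omega> + T \<partial>JJ)"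
    by (rule decomp_both(2)[OF prob_Dm prob_noise[OF \<sigma>] prob_U k, symmetric]) measurable
  also have "\<dots> = (\<integral>\<^sup>+\<omega>. Fs 0 \<omega> \<partial>JJ) + T"
    by (subst nn_integral_add) (auto simp: JJ.emeasure_space_1)
  finally show ?thesis unfolding T_def .
qed


definition Ft :: "(nat\<Rightarrow>real)\<times>(nat\<Rightarrow>real)\<times>real \<Rightarrow> ennreal" where
  "Ft \<omega> = of_bool (\<tau> (\<lambda>i\<in>{..<n}. fst \<omega> i + fst (snd \<omega>) i, snd (snd \<omega>)) = k)"

lemma Ft_meas[measurable]: "Ft \<in> borel_measurable JJ"
proof -
  have ek: "(\<lambda>\<omega>. fst (snd \<omega>) j) \<in> JJ \<rightarrow>\<^sub>M borel" if "j < n" for j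
    by (rule measurable_compose[OF measurable_compose[OF measurable_snd measurable_fst] comp_noise]) (use that in simp)
  have xk: "(\<lambda>\<omega>. fst \<omega> j) \<in> JJ \<rightarrow>\<^sub>M borel" if "j < n" for j
    by (rule measurable_compose[OF measurable_fst comp_Dm]) (use that in simp)
  have Y: "(\<lambda>\<omega>. ((\<lambda>i\<in>{..<n}. fst \<omega> i + fst (snd \<omega>) i), snd (snd \<omega>)))
     \<in> JJ \<rightarrow>\<^sub>M PiM {..<n} (\<lambda>_. borel) \<Otimes>\<^sub>M borel"
  proof (rule measurable_Pair)
    show "(\<lambda>\<omega>. (\<lambda>i\<in>{..<n}. fst \<omega> i + fst (snd \<omega>) i)) \<in> JJ \<rightarrow>\<^sub>M PiM {..<n} (\<lambda>_. borel)"
    proof (rule measurable_restrict)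
      fix i assume i: "i \<in> {..<n}"
      show "(\<lambda>\<omega>. fst \<omega> i + fst (snd \<omega>) i) \<in> JJ \<rightarrow>\<^sub>M borel"
        using i by (intro borel_measurable_add ek xk) auto
    qed
    show "(\<lambda>\<omega>. snd (snd \<omega>)) \<in> JJ \<rightarrow>\<^sub>M borel"
      using measurable_compose[OF measurable_snd[of "PiM {..<n} (\<lambda>_. Dm p \<delta>)" "PiM {..<n} (\<lambda>_. noise \<sigma>) \<Otimes>\<^sub>M uniform_measure lborel {0..1}"] snd_U[of "PiM {..<n} (\<lambda>_. noise \<sigma>)"]] .
  qed
  have "(\<lambda>z::nat. of_bool (z = k) :: ennreal) \<in> count_space UNIV \<rightarrow>\<^sub>M borel" by simp
  from measurable_compose[OF measurable_compose[OF Y tau_meas] this]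
  show ?thesis unfolding Ft_def[abs_def] .
qed

lemma Ft_Fs: "Ft (x(k:=a), e, u) = Fs a (x(k:=b), e, u)"
  unfolding Ft_def Fs_def by (rule arg_cong[where f=of_bool], rule arg_cong2[where f="(=)"], rule arg_cong[where f=\<tau>]) (auto simp: fun_eq_iff)

lemma Fs_indep: "Fs c (x(k:=a), e, u) = Fs c (x(k:=b), e, u)"
  unfolding Fs_def by (rule arg_cong[where f=of_bool], rule arg_cong2[where f="(=)"], rule arg_cong[where f=\<tau>]) (auto simp: fun_eq_iff)

lemma cmult2:
  assumes "sigma_finite_measure U" and g: "g \<in> borel_measurable (M \<Otimes>\<^sub>M U)"
  shows "(\<integral>\<^sup>+e. \<integral>\<^sup>+u. c * g (e,u) \<partial>U \<partial>M) = c * (\<integral>\<^sup>+e. \<integral>\<^sup>+u. g (e,u) \<partial>U \<partial>M)"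
proof -
  interpret U: sigma_finite_measure U by fact
  have "(\<integral>\<^sup>+e. \<integral>\<^sup>+u. c * g (e,u) \<partial>U \<partial>M) = (\<integral>\<^sup>+e. c * \<integral>\<^sup>+u. g (e,u) \<partial>U \<partial>M)"
    by (intro nn_integral_cong nn_integral_cmult measurable_Pair2[OF g])
  also have "\<dots> = c * (\<integral>\<^sup>+e. \<integral>\<^sup>+u. g (e,u) \<partial>U \<partial>M)"
    by (intro nn_integral_cmult U.borel_measurable_nn_integral_fst g)
  finally show ?thesis .
qed

lemma upd_space: "x \<in> space (PiM ({..<n}-{k}) (\<lambda>_. Dm p \<delta>)) \<Longrightarrow> x(k:=a) \<in> space (PiM {..<n} (\<lambda>_. Dm p \<delta>))"
  using k by (auto simp: space_PiM PiE_def extensional_def)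

lemma Fs_sec_meas: "x' \<in> space (PiM {..<n} (\<lambda>_. Dm p \<delta>)) \<Longrightarrow>
   (\<lambda>eu. Fs c (x', eu)) \<in> borel_measurable (PiM {..<n} (\<lambda>_. noise \<sigma>) \<Otimes>\<^sub>M UU)"
  by (rule measurable_Pair2[OF Fs_meas])

lemma claimA:
  "(\<integral>\<^sup>+\<omega>. Ft \<omega> * ennreal (fst \<omega> k) \<partial>JJ) = ennreal (p * \<delta>) * (\<integral>\<^sup>+\<omega>. Fs \<delta> \<omega> \<partial>JJ)"
proof -
  interpret U: prob_space UU by (rule prob_U)
  have pp: "0 \<le> p" "p \<le> 1" "\<delta> \<noteq> 0" using p \<delta> by auto
  have "(\<lambda>\<omega>. fst \<omega> k) \<in> JJ \<rightarrow>\<^sub>M borel"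
    by (rule measurable_compose[OF measurable_fst comp_Dm]) (use k in simp)
  then have mF: "(\<lambda>\<omega>. Ft \<omega> * ennreal (fst \<omega> k)) \<in> borel_measurable JJ"
    by (intro borel_measurable_times_ennreal Ft_meas measurable_compose[OF _ measurable_ennreal])
  have "(\<integral>\<^sup>+\<omega>. Ft \<omega> * ennreal (fst \<omega> k) \<partial>JJ) = (\<integral>\<^sup>+x. \<integral>\<^sup>+a. \<integral>\<^sup>+e. \<integral>\<^sup>+u. Ft (x(k:=a), e, u) * ennreal ((x(k:=a)) k) \<partial>UU \<partial>PiM {..<n} (\<lambda>_. noise \<sigma>) \<partial>Dm p \<delta> \<partial>PiM ({..<n}-{k}) (\<lambda>_. Dm p \<delta>))"
    using decomp_both(1)[OF prob_Dm prob_noise[OF \<sigma>] prob_U k mF] by (simp only: fst_conv)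
  also have "\<dots> = (\<integral>\<^sup>+x. \<integral>\<^sup>+a. \<integral>\<^sup>+e. \<integral>\<^sup>+u. ennreal (p * \<delta>) * Fs \<delta> (x(k:=a), e, u) \<partial>UU \<partial>PiM {..<n} (\<lambda>_. noise \<sigma>) \<partial>Dm p \<delta> \<partial>PiM ({..<n}-{k}) (\<lambda>_. Dm p \<delta>))"
  proof (rule nn_integral_cong)
    fix x assume x: "x \<in> space (PiM ({..<n}-{k}) (\<lambda>_. Dm p \<delta>))"
    define G where "G = (\<integral>\<^sup>+e. \<integral>\<^sup>+u. Fs \<delta> (x(k:=0), e, u) \<partial>UU \<partial>PiM {..<n} (\<lambda>_. noise \<sigma>))"
    have m: "(\<lambda>(e, u). Fs \<delta> (x(k:=0), e, u)) \<in> borel_measurable (PiM {..<n} (\<lambda>_. noise \<sigma>) \<Otimes>\<^sub>M UU)"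
      using Fs_sec_meas[OF upd_space[OF x], of \<delta>] by (simp add: case_prod_beta')
    have "(\<integral>\<^sup>+a. \<integral>\<^sup>+e. \<integral>\<^sup>+u. Ft (x(k:=a), e, u) * ennreal ((x(k:=a)) k) \<partial>UU \<partial>PiM {..<n} (\<lambda>_. noise \<sigma>) \<partial>Dm p \<delta>)
       = ennreal p * (\<integral>\<^sup>+e. \<integral>\<^sup>+u. ennreal \<delta> * Fs \<delta> (x(k:=0), e, u) \<partial>UU \<partial>PiM {..<n} (\<lambda>_. noise \<sigma>))"
      by (subst nn_integral_Dm[OF pp]) (simp add: Ft_Fs[where b=0] mult.commute)
    also have "\<dots> = ennreal p * (ennreal \<delta> * G)"
      using cmult2[OF U.sigma_finite_measure_axioms m, of "ennreal \<delta>"] unfolding G_def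
      by (simp only: prod.case)
    also have "\<dots> = ennreal (p * \<delta>) * G" using p \<delta> by (simp add: ennreal_mult mult.assoc)
    also have "\<dots> = (\<integral>\<^sup>+a. ennreal (p * \<delta>) * G \<partial>Dm p \<delta>)"
      using prob_space.emeasure_space_1[OF prob_Dm, of p \<delta>] by (simp only: nn_integral_const mult_1_right)
    also have "\<dots> = (\<integral>\<^sup>+a. \<integral>\<^sup>+e. \<integral>\<^sup>+u. ennreal (p * \<delta>) * Fs \<delta> (x(k:=a), e, u) \<partial>UU \<partial>PiM {..<n} (\<lambda>_. noise \<sigma>) \<partial>Dm p \<delta>)"
    proof (rule nn_integral_cong)
      fix a
      show "ennreal (p * \<delta>) * G = (\<integral>\<^sup>+e. \<integral>\<^sup>+u. ennreal (p * \<delta>) * Fs \<delta> (x(k:=a), e, u) \<partial>UU \<partial>PiM {..<n} (\<lambda>_. noise \<sigma>))"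
        using cmult2[OF U.sigma_finite_measure_axioms m, of "ennreal (p * \<delta>)"] unfolding G_def
        by (simp add: Fs_indep[where a=a and b=0])
    qed
    finally show "(\<integral>\<^sup>+a. \<integral>\<^sup>+e. \<integral>\<^sup>+u. Ft (x(k:=a), e, u) * ennreal ((x(k:=a)) k) \<partial>UU \<partial>PiM {..<n} (\<lambda>_. noise \<sigma>) \<partial>Dm p \<delta>) =
      (\<integral>\<^sup>+a. \<integral>\<^sup>+e. \<integral>\<^sup>+u. ennreal (p * \<delta>) * Fs \<delta> (x(k:=a), e, u) \<partial>UU \<partial>PiM {..<n} (\<lambda>_. noise \<sigma>) \<partial>Dm p \<delta>)" .
  qed
  also have "\<dots> = (\<integral>\<^sup>+\<omega>. ennreal (p * \<delta>) * Fs \<delta> \<omega> \<partial>JJ)"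
    by (rule decomp_both(1)[OF prob_Dm prob_noise[OF \<sigma>] prob_U k, symmetric]) measurable
  also have "\<dots> = ennreal (p * \<delta>) * (\<integral>\<^sup>+\<omega>. Fs \<delta> \<omega> \<partial>JJ)"
    by (rule nn_integral_cmult) measurable
  finally show ?thesis .
qed


lemma claimB:
  "ennreal (1 - p) * (\<integral>\<^sup>+\<omega>. Fs 0 \<omega> \<partial>JJ) \<le> (\<integral>\<^sup>+\<omega>. Ft \<omega> \<partial>JJ)"
proof -
  interpret U: prob_space UU by (rule prob_U)
  have pp: "0 \<le> p" "p \<le> 1" "\<delta> \<noteq> 0" using p \<delta> by auto
  have "ennreal (1 - p) * (\<integral>\<^sup>+\<omega>. Fs 0 \<omega> \<partial>JJ) = (\<integral>\<^sup>+\<omega>. ennreal (1 - p) * Fs 0 \<omega> \<partial>JJ)"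
    by (rule nn_integral_cmult[symmetric]) measurable
  also have "\<dots> = (\<integral>\<^sup>+x. \<integral>\<^sup>+a. \<integral>\<^sup>+e. \<integral>\<^sup>+u. ennreal (1 - p) * Fs 0 (x(k:=a), e, u) \<partial>UU \<partial>PiM {..<n} (\<lambda>_. noise \<sigma>) \<partial>Dm p \<delta> \<partial>PiM ({..<n}-{k}) (\<lambda>_. Dm p \<delta>))"
    by (rule decomp_both(1)[OF prob_Dm prob_noise[OF \<sigma>] prob_U k]) measurable
  also have "\<dots> \<le> (\<integral>\<^sup>+x. \<integral>\<^sup>+a. \<integral>\<^sup>+e. \<integral>\<^sup>+u. Ft (x(k:=a), e, u) \<partial>UU \<partial>PiM {..<n} (\<lambda>_. noise \<sigma>) \<partial>Dm p \<delta> \<partial>PiM ({..<n}-{k}) (\<lambda>_. Dm p \<delta>))"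
  proof (rule nn_integral_mono)
    fix x assume x: "x \<in> space (PiM ({..<n}-{k}) (\<lambda>_. Dm p \<delta>))"
    define G where "G = (\<integral>\<^sup>+e. \<integral>\<^sup>+u. Fs 0 (x(k:=0), e, u) \<partial>UU \<partial>PiM {..<n} (\<lambda>_. noise \<sigma>))"
    have m: "(\<lambda>(e, u). Fs 0 (x(k:=0), e, u)) \<in> borel_measurable (PiM {..<n} (\<lambda>_. noise \<sigma>) \<Otimes>\<^sub>M UU)"
      using Fs_sec_meas[OF upd_space[OF x], of 0] by (simp add: case_prod_beta')
    have "(\<integral>\<^sup>+a. \<integral>\<^sup>+e. \<integral>\<^sup>+u. ennreal (1 - p) * Fs 0 (x(k:=a), e, u) \<partial>UU \<partial>PiM {..<n} (\<lambda>_. noise \<sigma>) \<partial>Dm p \<delta>)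
       = (\<integral>\<^sup>+a. ennreal (1 - p) * G \<partial>Dm p \<delta>)"
    proof (rule nn_integral_cong)
      fix a
      show "(\<integral>\<^sup>+e. \<integral>\<^sup>+u. ennreal (1 - p) * Fs 0 (x(k:=a), e, u) \<partial>UU \<partial>PiM {..<n} (\<lambda>_. noise \<sigma>)) = ennreal (1 - p) * G"
        using cmult2[OF U.sigma_finite_measure_axioms m, of "ennreal (1 - p)"] unfolding G_def
        by (simp add: Fs_indep[where a=a and b=0])
    qed
    also have "\<dots> = ennreal (1 - p) * G"
      using prob_space.emeasure_space_1[OF prob_Dm, of p \<delta>] by (simp only: nn_integral_const mult_1_right)
    also have "\<dots> \<le> ennreal (1 - p) * G + ennreal p * (\<integral>\<^sup>+e. \<integral>\<^sup>+u. Ft (x(k:=\<delta>), e, u) \<partial>UU \<partial>PiM {..<n} (\<lambda>_. noise \<sigma>))"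
      by simp
    also have "\<dots> = (\<integral>\<^sup>+a. \<integral>\<^sup>+e. \<integral>\<^sup>+u. Ft (x(k:=a), e, u) \<partial>UU \<partial>PiM {..<n} (\<lambda>_. noise \<sigma>) \<partial>Dm p \<delta>)"
      unfolding G_def by (subst nn_integral_Dm[OF pp]) (simp add: Ft_Fs[where a=0 and b=0])
    finally show "(\<integral>\<^sup>+a. \<integral>\<^sup>+e. \<integral>\<^sup>+u. ennreal (1 - p) * Fs 0 (x(k:=a), e, u) \<partial>UU \<partial>PiM {..<n} (\<lambda>_. noise \<sigma>) \<partial>Dm p \<delta>)
       \<le> (\<integral>\<^sup>+a. \<integral>\<^sup>+e. \<integral>\<^sup>+u. Ft (x(k:=a), e, u) \<partial>UU \<partial>PiM {..<n} (\<lambda>_. noise \<sigma>) \<partial>Dm p \<delta>)" .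
  qed
  also have "\<dots> = (\<integral>\<^sup>+\<omega>. Ft \<omega> \<partial>JJ)"
    by (rule decomp_both(1)[OF prob_Dm prob_noise[OF \<sigma>] prob_U k, symmetric]) measurable
  finally show ?thesis .
qed


lemma F1_meas: "(\<lambda>\<omega>. of_bool (\<tau> (\<lambda>i\<in>{..<n}. fst \<omega> i + fst (snd \<omega>) i, snd (snd \<omega>)) = k) * ennreal (fst \<omega> k)) \<in> borel_measurable JJ"
proof -
  have "(\<lambda>\<omega>. fst \<omega> k) \<in> JJ \<rightarrow>\<^sub>M borel"
    by (rule measurable_compose[OF measurable_fst comp_Dm]) (use k in simp)
  then have "(\<lambda>\<omega>. Ft \<omega> * ennreal (fst \<omega> k)) \<in> borel_measurable JJ"
    by (intro borel_measurable_times_ennreal Ft_meas measurable_compose[OF _ measurable_ennreal])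
  then show ?thesis unfolding Ft_def .
qed

lemma F0_meas: "(\<lambda>\<omega>. of_bool (\<tau> (\<lambda>i\<in>{..<n}. fst \<omega> i + fst (snd \<omega>) i, snd (snd \<omega>)) = k) :: ennreal) \<in> borel_measurable JJ"
  using Ft_meas unfolding Ft_def[abs_def] .

lemma claimD:
  "(\<integral>\<^sup>+\<omega>. of_bool (\<tau> (\<lambda>i\<in>{..<n}. fst \<omega> i + fst (snd \<omega>) i, snd (snd \<omega>)) = k) * ennreal (fst \<omega> k) \<partial>JJ)
   \<le> ennreal (p * \<delta> / (1 - p)) * (\<integral>\<^sup>+\<omega>. of_bool (\<tau> (\<lambda>i\<in>{..<n}. fst \<omega> i + fst (snd \<omega>) i, snd (snd \<omega>)) = k) \<partial>JJ)
     + ennreal (p * \<delta> * ((\<delta>/\<sigma>\<^sup>2) * (\<sigma> * sqrt (2/pi) + \<delta>)))"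
proof -
  define T where "T = (\<delta>/\<sigma>\<^sup>2) * (\<sigma> * sqrt (2/pi) + \<delta>)"
  have T: "T \<ge> 0" unfolding T_def using \<sigma> \<delta> by simp
  have "(\<integral>\<^sup>+\<omega>. of_bool (\<tau> (\<lambda>i\<in>{..<n}. fst \<omega> i + fst (snd \<omega>) i, snd (snd \<omega>)) = k) * ennreal (fst \<omega> k) \<partial>JJ)
      = ennreal (p * \<delta>) * (\<integral>\<^sup>+\<omega>. Fs \<delta> \<omega> \<partial>JJ)"
    using claimA unfolding Ft_def .
  also have "\<dots> \<le> ennreal (p * \<delta>) * ((\<integral>\<^sup>+\<omega>. Fs 0 \<omega> \<partial>JJ) + ennreal T)"
    using claimC unfolding T_def by (rule mult_left_mono) simp
  also have "\<dots> = ennreal (p * \<delta> / (1 - p)) * (ennreal (1 - p) * (\<integral>\<^sup>+\<omega>. Fs 0 \<omega> \<partial>JJ)) + ennreal (p * \<delta> * T)"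
  proof -
    have e1: "ennreal (p * \<delta>) = ennreal (p * \<delta> / (1 - p)) * ennreal (1 - p)"
      using p \<delta> by (simp add: ennreal_mult[symmetric])
    have e2: "ennreal (p * \<delta>) * ennreal T = ennreal (p * \<delta> * T)"
      using p \<delta> T by (simp add: ennreal_mult[symmetric])
    show ?thesis by (simp only: distrib_left e2) (simp only: e1 mult.assoc)
  qed
  also have "\<dots> \<le> ennreal (p * \<delta> / (1 - p)) * (\<integral>\<^sup>+\<omega>. Ft \<omega> \<partial>JJ) + ennreal (p * \<delta> * T)"
    by (intro add_right_mono mult_left_mono claimB) simp
  finally show ?thesis unfolding Ft_def T_def .
qed

end


lemma real_int_le:
  fixes f :: "'a \<Rightarrow> real"
  assumes le: "(\<integral>\<^sup>+x. ennreal (f x) \<partial>M) \<le> ennreal B" and B: "B \<ge> 0"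
  shows "(\<integral>x. f x \<partial>M) \<le> B"
proof (cases "integrable M f")
  case True
  have "(\<integral>x. f x \<partial>M) = enn2real (\<integral>\<^sup>+x. ennreal (f x) \<partial>M) - enn2real (\<integral>\<^sup>+x. ennreal (- f x) \<partial>M)"
    by (rule real_lebesgue_integral_def[OF True])
  also have "\<dots> \<le> enn2real (\<integral>\<^sup>+x. ennreal (f x) \<partial>M)" by simp
  also have "\<dots> \<le> enn2real (ennreal B)" by (rule enn2real_mono[OF le]) simp
  finally show ?thesis using B by simp
next
  case False then show ?thesis using B by (simp add: not_integrable_integral_eq)
qed

lemma payoff_bound:
  fixes \<sigma> p \<delta> :: real and n :: nat and \<tau>
  assumes \<sigma>: "\<sigma> > 0" and p: "0 < p" "p < 1" and \<delta>: "0 < \<delta>" and \<tau>: "\<tau> \<in> rules n"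
  shows "payoff (Dm p \<delta>) \<sigma> n \<tau> \<le> p * \<delta> / (1 - p) + real n * (p * \<delta> * ((\<delta>/\<sigma>\<^sup>2) * (\<sigma> * sqrt (2/pi) + \<delta>)))"
proof -
  define c where "c = p * \<delta> / (1 - p)"
  define d where "d = p * \<delta> * ((\<delta>/\<sigma>\<^sup>2) * (\<sigma> * sqrt (2/pi) + \<delta>))"
  have c0: "c \<ge> 0" and d0: "d \<ge> 0" using p \<delta> \<sigma> by (auto simp: c_def d_def)
  let ?J = "PiM {..<n} (\<lambda>_. Dm p \<delta>) \<Otimes>\<^sub>M (PiM {..<n} (\<lambda>_. noise \<sigma>) \<Otimes>\<^sub>M uniform_measure lborel {0..1::real})"
  interpret J: prob_space ?J
    by (intro prob_space_pair prob_space_PiM prob_Dm prob_noise[OF \<sigma>] prob_U)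
  define K where "K = (\<lambda>\<omega>::(nat\<Rightarrow>real)\<times>(nat\<Rightarrow>real)\<times>real. \<tau> (\<lambda>i\<in>{..<n}. fst \<omega> i + fst (snd \<omega>) i, snd (snd \<omega>)))"
  define f where "f = (\<lambda>\<omega>::(nat\<Rightarrow>real)\<times>(nat\<Rightarrow>real)\<times>real. (let x = fst \<omega>; e = fst (snd \<omega>); u = snd (snd \<omega>);
        y = (\<lambda>i\<in>{..<n}. x i + e i); k = \<tau> (y, u)
      in if k < n then x k else 0))"
  have f_eq: "ennreal (f \<omega>) = (\<Sum>k<n. of_bool (K \<omega> = k) * ennreal (fst \<omega> k))" for \<omega>
  proof -
    have "(\<Sum>k<n. of_bool (K \<omega> = k) * ennreal (fst \<omega> k)) = (\<Sum>k<n. if K \<omega> = k then ennreal (fst \<omega> k) else 0)"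
      by (intro sum.cong) auto
    also have "\<dots> = (if K \<omega> < n then ennreal (fst \<omega> (K \<omega>)) else 0)"
      by (subst sum.delta') auto
    finally show ?thesis unfolding f_def K_def Let_def by simp
  qed
  have "(\<integral>\<^sup>+\<omega>. ennreal (f \<omega>) \<partial>?J) = (\<Sum>k<n. \<integral>\<^sup>+\<omega>. of_bool (K \<omega> = k) * ennreal (fst \<omega> k) \<partial>?J)"
    unfolding f_eq K_def
    by (rule nn_integral_sum) (rule F1_meas[OF \<sigma> p \<delta> _ \<tau>], simp)
  also have "\<dots> \<le> (\<Sum>k<n. ennreal c * (\<integral>\<^sup>+\<omega>. of_bool (K \<omega> = k) \<partial>?J) + ennreal d)"
    unfolding K_def c_def d_def
    by (rule sum_mono) (rule claimD[OF \<sigma> p \<delta> _ \<tau>], simp)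
  also have "\<dots> = ennreal c * (\<Sum>k<n. \<integral>\<^sup>+\<omega>. of_bool (K \<omega> = k) \<partial>?J) + of_nat n * ennreal d"
    by (simp add: sum.distrib sum_distrib_left)
  also have "(\<Sum>k<n. \<integral>\<^sup>+\<omega>. of_bool (K \<omega> = k) \<partial>?J) = (\<integral>\<^sup>+\<omega>. (\<Sum>k<n. of_bool (K \<omega> = k)) \<partial>?J)"
    unfolding K_def
    by (rule nn_integral_sum[symmetric]) (rule F0_meas[OF \<sigma> p \<delta> _ \<tau>], simp)
  also have "\<dots> \<le> (\<integral>\<^sup>+\<omega>. 1 \<partial>?J)"
  proof (rule nn_integral_mono)
    fix \<omega>
    have "(\<Sum>k<n. of_bool (K \<omega> = k) :: ennreal) = (\<Sum>k<n. if K \<omega> = k then 1 else 0)"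
      by (intro sum.cong) auto
    also have "\<dots> = (if K \<omega> < n then 1 else 0)"
      by (subst sum.delta') auto
    finally show "(\<Sum>k<n. of_bool (K \<omega> = k) :: ennreal) \<le> 1" by simp
  qed
  also have "(\<integral>\<^sup>+\<omega>. 1 \<partial>?J) = 1" by (simp add: J.emeasure_space_1)
  finally have le: "(\<integral>\<^sup>+\<omega>. ennreal (f \<omega>) \<partial>?J) \<le> ennreal c * 1 + of_nat n * ennreal d"
    by (rule order_trans) (intro add_right_mono mult_left_mono order_refl, simp_all)
  have "ennreal c * 1 + of_nat n * ennreal d = ennreal (c + real n * d)"
    using c0 d0 by (simp add: ennreal_mult ennreal_plus ennreal_of_nat_eq_real_of_nat)
  with le have "(\<integral>\<^sup>+\<omega>. ennreal (f \<omega>) \<partial>?J) \<le> ennreal (c + real n * d)" by simp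
  then have "(\<integral>\<omega>. f \<omega> \<partial>?J) \<le> c + real n * d"
    by (rule real_int_le) (use c0 d0 in simp)
  then show ?thesis unfolding payoff_def joint_def f_def c_def d_def .
qed



lemma prophet_Dm:
  fixes p \<delta> :: real and n :: nat
  assumes p: "0 < p" "p < 1" and \<delta>: "0 < \<delta>" and n: "n \<ge> 1"
  shows "prophet (Dm p \<delta>) n = \<delta> * (1 - (1 - p)^n)"
proof -
  let ?P = "PiM {..<n} (\<lambda>_. Dm p \<delta>)"
  define A where "A = PiE {..<n} (\<lambda>_. {0::real})"
  interpret P: prob_space ?P by (intro prob_space_PiM prob_Dm)
  interpret PD: product_sigma_finite "\<lambda>_::nat. Dm p \<delta>"
    by (simp add: product_sigma_finite_def prob_space_imp_sigma_finite prob_Dm)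
  have A: "A \<in> sets ?P" unfolding A_def by (intro sets_PiM_I_finite) auto
  have AE1: "AE x in ?P. \<forall>i\<in>{..<n}. x i \<in> {0, \<delta>}"
    by (intro eventually_ball_finite ballI AE_PiM_component prob_Dm AE_Dm) auto
  have AE2: "AE x in ?P. x \<in> space ?P" by (rule AE_I2)
  have "AE x in ?P. (MAX i\<in>{..<n}. x i) = \<delta> - \<delta> * indicator A x"
    using AE1 AE2
  proof (eventually_elim)
    case (elim x)
    show ?case
    proof (cases "x \<in> A")
      case True
      then have "\<forall>i\<in>{..<n}. x i = 0" unfolding A_def by auto
      then have "x ` {..<n} = {0}" using n by force
      then have "(MAX i\<in>{..<n}. x i) = 0" by simp
      then show ?thesis using True by simp
    next
      case False
      have "\<exists>i\<in>{..<n}. x i \<noteq> 0"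
      proof (rule ccontr)
        assume "\<not> ?thesis"
        then have "\<forall>i\<in>{..<n}. x i = 0" by auto
        moreover have "x \<in> extensional {..<n}" using elim(2) by (simp add: space_PiM PiE_def)
        ultimately have "x \<in> A" unfolding A_def PiE_def Pi_def by blast
        with False show False by simp
      qed
      then obtain i where i: "i < n" "x i = \<delta>" using elim by auto
      have "(MAX i\<in>{..<n}. x i) = \<delta>"
      proof (rule Max_eqI)
        fix y assume "y \<in> x ` {..<n}"
        then obtain j where "j < n" "y = x j" by auto
        then show "y \<le> \<delta>" using elim(1) \<delta> by force
      next
        show "\<delta> \<in> x ` {..<n}" using i by (auto intro!: image_eqI[of _ _ i])
      qed simp
      then show ?thesis using False by simp
    qed
  qed
  note ae = this
  have mMax: "(\<lambda>x. MAX i\<in>{..<n}. x i) \<in> borel_measurable ?P"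
    by (rule borel_measurable_Max) (auto intro: comp_Dm)
  have "prophet (Dm p \<delta>) n = (\<integral>x. \<delta> - \<delta> * indicator A x \<partial>?P)"
    unfolding prophet_def by (rule integral_cong_AE[OF mMax _ ae]) (intro borel_measurable_diff borel_measurable_times measurable_const borel_measurable_indicator A, simp_all)
  also have "\<dots> = \<delta> - \<delta> * measure ?P A"
  proof -
    have intA: "integrable ?P (indicator A :: _ \<Rightarrow> real)"
      by (rule integrable_real_indicator[OF A]) (simp add: less_top[symmetric])
    then show ?thesis using A by (subst Bochner_Integration.integral_diff) (auto simp: P.prob_space)
  qed
  also have "measure ?P A = (1 - p)^n"
  proof -
    have "emeasure ?P A = (\<Prod>i\<in>{..<n}. emeasure (Dm p \<delta>) {0})"
      unfolding A_def by (rule PD.emeasure_PiM) auto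
    also have "\<dots> = ennreal ((1-p)^n)"
      using emeasure_Dm(1)[of p \<delta>] p \<delta> by (simp add: ennreal_power)
    finally show ?thesis using p by (simp add: measure_def)
  qed
  finally show ?thesis by (simp add: algebra_simps)
qed



lemma pow_half:
  fixes n :: nat assumes n: "n \<ge> 1"
  shows "(1 - 1 / (real n + 1))^n \<le> 1/2"
proof -
  have "1 + real n * (1 / real n) \<le> (1 + 1 / real n)^n"
  proof (rule Bernoulli_inequality)
    have "0 \<le> 1 / real n" by simp
    then show "- 1 \<le> 1 / real n" by linarith
  qed
  then have b: "2 \<le> (1 + 1 / real n)^n" using n by simp
  have rn: "real n > 0" using n by simp
  have ea: "1 - 1 / (real n + 1) = real n / (real n + 1)" by (simp add: field_simps)
  have eb: "1 + 1 / real n = (real n + 1) / real n" using rn by (simp add: field_simps)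
  have "(1 - 1 / (real n + 1)) * (1 + 1 / real n) = 1" unfolding ea eb using rn by simp
  then have "(1 - 1 / (real n + 1))^n * (1 + 1 / real n)^n = 1"
    by (metis power_mult_distrib power_one)
  moreover have "(1 - 1 / (real n + 1))^n \<ge> 0" by simp
  ultimately show ?thesis using b mult_left_mono[OF b, of "(1 - 1 / (real n + 1))^n"]
    by linarith
qed

lemma const_rule: "(\<lambda>_. n) \<in> rules n"
  unfolding rules_def by simp

lemma payoff_const: "payoff D \<sigma> n (\<lambda>_. n) = 0"
  unfolding payoff_def by (simp add: Let_def)

theorem proposition1:
  fixes \<sigma> :: real
  assumes "\<sigma> > 0"
  shows "\<exists>D :: nat \<Rightarrow> real measure.
           (\<forall>n\<ge>1. prob_space (D n) \<and> sets (D n) = sets borel \<and>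
                   emeasure (D n) {0..1} = 1 \<and> prophet (D n) n > 0) \<and>
           (\<lambda>n. (SUP \<tau>\<in>rules n. payoff (D n) \<sigma> n \<tau>) / prophet (D n) n) \<longlonglongrightarrow> 0"
proof -
  define q where "q = (\<lambda>n::nat. 1 / (real n + 1))"
  define D where "D = (\<lambda>n. Dm (q n) (q n))"
  define C where "C = (\<sigma> * sqrt (2/pi) + 1) / \<sigma>\<^sup>2"
  have C0: "C \<ge> 0" unfolding C_def using assms by simp
  have q: "0 < q n" "q n < 1" if "n \<ge> 1" for n using that by (auto simp: q_def)
  have proph: "prophet (D n) n = q n * (1 - (1 - q n)^n)" if "n \<ge> 1" for n
    unfolding D_def by (rule prophet_Dm) (use q[OF that] that in auto)
  have proph_ge: "prophet (D n) n \<ge> q n / 2" if "n \<ge> 1" for n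
  proof -
    have "(1 - q n)^n \<le> 1/2" using pow_half[OF that] by (simp add: q_def)
    then have "q n * (1/2) \<le> q n * (1 - (1 - q n)^n)" using q[OF that] by (intro mult_left_mono) auto
    then show ?thesis using proph[OF that] by simp
  qed
  have P1: "prob_space (D n) \<and> sets (D n) = sets borel \<and> emeasure (D n) {0..1} = 1 \<and> prophet (D n) n > 0"
    if n: "n \<ge> 1" for n
  proof (intro conjI)
    show "prob_space (D n)" unfolding D_def by (rule prob_Dm)
    show "sets (D n) = sets borel" unfolding D_def by (rule sets_Dm)
    have "(\<lambda>b. if b then q n else 0) -` {0..1} \<inter> space (measure_pmf (bernoulli_pmf (q n))) = UNIV"
      using q[OF n] by auto
    then show "emeasure (D n) {0..1} = 1"
      unfolding D_def Dm_def by (subst emeasure_distr) (auto simp: measure_pmf.emeasure_space_1)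
    show "prophet (D n) n > 0" using proph_ge[OF n] q[OF n] by simp
  qed
  have bound: "(SUP \<tau>\<in>rules n. payoff (D n) \<sigma> n \<tau>) / prophet (D n) n \<le> 2 * (1 + C) * inverse (real n)"
    and bound0: "0 \<le> (SUP \<tau>\<in>rules n. payoff (D n) \<sigma> n \<tau>) / prophet (D n) n"
    if n: "n \<ge> 1" for n
  proof -
    define B where "B = q n * q n / (1 - q n) + real n * (q n * q n * ((q n/\<sigma>\<^sup>2) * (\<sigma> * sqrt (2/pi) + q n)))"
    have pb: "payoff (D n) \<sigma> n \<tau> \<le> B" if "\<tau> \<in> rules n" for \<tau>
      unfolding D_def B_def by (rule payoff_bound[OF assms q[OF n] q(1)[OF n] that])
    have ne: "rules n \<noteq> {}" using const_rule by auto
    have bdd: "bdd_above ((\<lambda>\<tau>. payoff (D n) \<sigma> n \<tau>) ` rules n)" by (rule bdd_aboveI2[where M=B]) (rule pb)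
    have S1: "(SUP \<tau>\<in>rules n. payoff (D n) \<sigma> n \<tau>) \<le> B" using ne pb by (rule cSUP_least)
    have S0: "0 \<le> (SUP \<tau>\<in>rules n. payoff (D n) \<sigma> n \<tau>)"
      using cSUP_upper[OF const_rule bdd] payoff_const[of "D n" \<sigma> n] by simp
    have pp: "prophet (D n) n > 0" using P1[OF n] by simp
    show "0 \<le> (SUP \<tau>\<in>rules n. payoff (D n) \<sigma> n \<tau>) / prophet (D n) n" using S0 pp by simp
    have qn: "q n * (real n + 1) = 1" unfolding q_def by simp
    have rn: "real n \<ge> 1" using n by simp
    have B1: "q n * q n / (1 - q n) = q n / real n"
    proof -
      have e: "1 - q n = real n * q n" using qn by (simp add: algebra_simps)
      have "q n * q n / (1 - q n) = q n * q n / (real n * q n)" using e by simp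
      also have "\<dots> = q n / real n" using q[OF n] rn by simp
      finally show ?thesis .
    qed
    have T: "(q n/\<sigma>\<^sup>2) * (\<sigma> * sqrt (2/pi) + q n) \<le> q n * C"
      unfolding C_def using q[OF n] assms by (simp add: field_simps)
    have B2: "real n * (q n * q n * ((q n/\<sigma>\<^sup>2) * (\<sigma> * sqrt (2/pi) + q n))) \<le> q n * (q n * C)"
    proof -
      have "real n * q n \<le> 1" using qn q[OF n] by (simp add: algebra_simps)
      have "real n * (q n * q n * ((q n/\<sigma>\<^sup>2) * (\<sigma> * sqrt (2/pi) + q n))) \<le> real n * (q n * q n * (q n * C))"
        using T q[OF n] by (intro mult_left_mono) auto
      also have "\<dots> = (real n * q n) * (q n * (q n * C))" by simp
      also have "\<dots> \<le> 1 * (q n * (q n * C))"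
        using \<open>real n * q n \<le> 1\<close> q[OF n] C0 by (intro mult_right_mono) auto
      finally show ?thesis by simp
    qed
    have qinv: "q n \<le> inverse (real n)" unfolding q_def using rn by (simp add: field_simps)
    have "B \<le> q n / real n + q n * (q n * C)" unfolding B_def using B1 B2 by simp
    also have "\<dots> \<le> q n * (inverse (real n) * (1 + C))"
    proof -
      have "q n * C \<le> inverse (real n) * C" using qinv C0 by (intro mult_right_mono) auto
      then have h: "q n * (q n * C) \<le> q n * (inverse (real n) * C)" using q[OF n] by (intro mult_left_mono) auto
      have eq1: "q n * (inverse (real n) * (1 + C)) = q n * inverse (real n) + q n * (inverse (real n) * C)"
        by (simp add: algebra_simps)
      have eq2: "q n / real n = q n * inverse (real n)" by (simp add: divide_inverse)
      show ?thesis using h eq1 eq2 by linarith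
    qed
    finally have BB: "B \<le> q n * (inverse (real n) * (1 + C))" .
    have "(SUP \<tau>\<in>rules n. payoff (D n) \<sigma> n \<tau>) / prophet (D n) n \<le> B / (q n / 2)"
      using S0 S1 proph_ge[OF n] q[OF n] by (intro frac_le) auto
    also have "\<dots> \<le> (q n * (inverse (real n) * (1 + C))) / (q n / 2)"
      using BB q[OF n] by (intro divide_right_mono) auto
    also have "\<dots> = 2 * (1 + C) * inverse (real n)" using q[OF n] rn by (simp add: field_simps)
    finally show "(SUP \<tau>\<in>rules n. payoff (D n) \<sigma> n \<tau>) / prophet (D n) n \<le> 2 * (1 + C) * inverse (real n)" .
  qed
  have lim: "(\<lambda>n. 2 * (1 + C) * inverse (real n)) \<longlonglongrightarrow> 0"
    using tendsto_mult_right_zero[OF lim_inverse_n, of "2 * (1 + C)"] by simp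
  have "(\<lambda>n. (SUP \<tau>\<in>rules n. payoff (D n) \<sigma> n \<tau>) / prophet (D n) n) \<longlonglongrightarrow> 0"
  proof (rule tendsto_sandwich[OF _ _ tendsto_const lim])
    show "\<forall>\<^sub>F n in sequentially. 0 \<le> (SUP \<tau>\<in>rules n. payoff (D n) \<sigma> n \<tau>) / prophet (D n) n"
      using bound0 by (auto simp: eventually_sequentially)
    show "\<forall>\<^sub>F n in sequentially. (SUP \<tau>\<in>rules n. payoff (D n) \<sigma> n \<tau>) / prophet (D n) n \<le> 2 * (1 + C) * inverse (real n)"
      using bound by (auto simp: eventually_sequentially)
  qed
  then show ?thesis using P1 by blast
qed

end
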